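(* Let $G=(V,E)$ be a finite connected graph (loops allowed) equipped with a random walk $m=\{m_v\}_{v\in V}$ which is ergodic, with invariant distribution $\nu$, and suppose $G$ (with $m$) has Ricci curvature at least $\kappa>0$. Then for every $1$-Lipschitz function $f\colon V\to\mathbb{R}$ and every $t\ge 1$, \[\nu\big(f-E_\nu[f]>t\big)\le \exp\Big(-\frac{t^2\kappa}{7}\Big)\quad\text{and}\quad \nu\big(f-E_\nu[f]<-t\big)\le \exp\Big(-\frac{t^2\kappa}{7}\Big).\]
   Context: For a vertex $v$, $\Gamma(v)$ is the set of neighbors of $v$ and $N(v)=\Gamma(v)\cup\{v\}$. A random walk on $G$ is a family $m=\{m_v\}_{v\in V}$ of probability distributions on $V$ with $m_v$ supported on $N(v)$. It is ergodic if it has a unique invariant distribution $\nu$ (i.e. $\sum_{x}\nu(x)m_x(y)=\nu(y)$ for all $y$) and the distributions of the walk converge to $\nu$ from any starting vertex. $d(x,y)$ is the graph distance. For probability distributions $m_1,m_2$ on $V$, the transportation distance is $W(m_1,m_2)=\inf_A\sum_{x,y}A(x,y)d(x,y)$, the infimum over couplings $A\colon V\times V\to[0,1]$ with $\sum_y A(x,y)=m_1(x)$, $\sum_x A(x,y)=m_2(y)$. The (Ollivier) Ricci curvature is $\kappa(x,y)=1-W(m_x,m_y)/d(x,y)$ for $x\ne y$; $G$ has Ricci curvature at least $\kappa_0$ if $\kappa(x,y)\ge\kappa_0$ for all distinct $x,y\in V$. A function $f\colon V\to\mathbb{R}$ is $c$-Lipschitz if $|f(u)-f(v)|\le c$ for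 every edge $uv\in E$. $E_\nu$ denotes expectation with respect to $\nu$, and $\nu(\cdot)$ the $\nu$-probability of an event on $V$. *)

theory Defs
  imports "HOL-Analysis.Analysis"
begin

definition graph :: "'a set \<Rightarrow> ('a \<Rightarrow> 'a \<Rightarrow> bool) \<Rightarrow> bool" where
  "graph V E \<longleftrightarrow> finite V \<and> V \<noteq> {} \<and> (\<forall>u v. E u v \<longrightarrow> u \<in> V \<and> v \<in> V) \<and> (\<forall>u v. E u v \<longrightarrow> E v u)"

inductive reach :: "('a \<Rightarrow> 'a \<Rightarrow> bool) \<Rightarrow> nat \<Rightarrow> 'a \<Rightarrow> 'a \<Rightarrow> bool" for E where
  reach0: "reach E 0 u u"
| reachS: "E u w \<Longrightarrow> reach E n w v \<Longrightarrow> reach E (Suc n) u v"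

definition connected_graph :: "'a set \<Rightarrow> ('a \<Rightarrow> 'a \<Rightarrow> bool) \<Rightarrow> bool" where
  "connected_graph V E \<longleftrightarrow> (\<forall>u\<in>V. \<forall>v\<in>V. \<exists>n. reach E n u v)"

definition gdist :: "('a \<Rightarrow> 'a \<Rightarrow> bool) \<Rightarrow> 'a \<Rightarrow> 'a \<Rightarrow> real" where
  "gdist E u v = real (LEAST n. reach E n u v)"

definition prob_dist :: "'a set \<Rightarrow> ('a \<Rightarrow> real) \<Rightarrow> bool" where
  "prob_dist V p \<longleftrightarrow> (\<forall>x. 0 \<le> p x) \<and> (\<forall>x. x \<notin> V \<longrightarrow> p x = 0) \<and> sum p V = 1"

definition random_walk :: "'a set \<Rightarrow> ('a \<Rightarrow> 'a \<Rightarrow> bool) \<Rightarrow> ('a \<Rightarrow> 'a \<Rightarrow> real) \<Rightarrow> bool" where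
  "random_walk V E m \<longleftrightarrow> (\<forall>v\<in>V. prob_dist V (m v) \<and> (\<forall>x. m v x \<noteq> 0 \<longrightarrow> x = v \<or> E v x))"

definition walk_step :: "'a set \<Rightarrow> ('a \<Rightarrow> 'a \<Rightarrow> real) \<Rightarrow> ('a \<Rightarrow> real) \<Rightarrow> ('a \<Rightarrow> real)" where
  "walk_step V m p = (\<lambda>y. \<Sum>x\<in>V. p x * m x y)"

definition invariant_dist :: "'a set \<Rightarrow> ('a \<Rightarrow> 'a \<Rightarrow> real) \<Rightarrow> ('a \<Rightarrow> real) \<Rightarrow> bool" where
  "invariant_dist V m nu \<longleftrightarrow> prob_dist V nu \<and> (\<forall>y\<in>V. (\<Sum>x\<in>V. nu x * m x y) = nu y)"

definition ergodic_with :: "'a set \<Rightarrow> ('a \<Rightarrow> 'a \<Rightarrow> real) \<Rightarrow> ('a \<Rightarrow> real) \<Rightarrow> bool" where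
  "ergodic_with V m nu \<longleftrightarrow> invariant_dist V m nu
     \<and> (\<forall>mu. invariant_dist V m mu \<longrightarrow> mu = nu)
     \<and> (\<forall>v\<in>V. \<forall>y\<in>V. (\<lambda>n. ((walk_step V m) ^^ n) (\<lambda>x. if x = v then 1 else 0) y) \<longlonglongrightarrow> nu y)"

definition coupling :: "'a set \<Rightarrow> ('a \<Rightarrow> real) \<Rightarrow> ('a \<Rightarrow> real) \<Rightarrow> ('a \<times> 'a \<Rightarrow> real) \<Rightarrow> bool" where
  "coupling V m1 m2 A \<longleftrightarrow> (\<forall>p. 0 \<le> A p \<and> A p \<le> 1)
     \<and> (\<forall>x\<in>V. (\<Sum>y\<in>V. A (x, y)) = m1 x) \<and> (\<forall>y\<in>V. (\<Sum>x\<in>V. A (x, y)) = m2 y)"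

definition transport_dist :: "'a set \<Rightarrow> ('a \<Rightarrow> 'a \<Rightarrow> bool) \<Rightarrow> ('a \<Rightarrow> real) \<Rightarrow> ('a \<Rightarrow> real) \<Rightarrow> real" where
  "transport_dist V E m1 m2 = Inf {(\<Sum>(x, y)\<in>V \<times> V. A (x, y) * gdist E x y) | A. coupling V m1 m2 A}"

definition ricci :: "'a set \<Rightarrow> ('a \<Rightarrow> 'a \<Rightarrow> bool) \<Rightarrow> ('a \<Rightarrow> 'a \<Rightarrow> real) \<Rightarrow> 'a \<Rightarrow> 'a \<Rightarrow> real" where
  "ricci V E m x y = 1 - transport_dist V E (m x) (m y) / gdist E x y"

definition ricci_at_least :: "'a set \<Rightarrow> ('a \<Rightarrow> 'a \<Rightarrow> bool) \<Rightarrow> ('a \<Rightarrow> 'a \<Rightarrow> real) \<Rightarrow> real \<Rightarrow> bool" where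
  "ricci_at_least V E m k \<longleftrightarrow> (\<forall>x\<in>V. \<forall>y\<in>V. x \<noteq> y \<longrightarrow> k \<le> ricci V E m x y)"

definition lipschitz_graph :: "('a \<Rightarrow> 'a \<Rightarrow> bool) \<Rightarrow> real \<Rightarrow> ('a \<Rightarrow> real) \<Rightarrow> bool" where
  "lipschitz_graph E c f \<longleftrightarrow> (\<forall>u v. E u v \<longrightarrow> \<bar>f u - f v\<bar> \<le> c)"

definition expect :: "'a set \<Rightarrow> ('a \<Rightarrow> real) \<Rightarrow> ('a \<Rightarrow> real) \<Rightarrow> real" where
  "expect V nu f = (\<Sum>x\<in>V. nu x * f x)"

definition dprob :: "'a set \<Rightarrow> ('a \<Rightarrow> real) \<Rightarrow> ('a \<Rightarrow> bool) \<Rightarrow> real" where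
  "dprob V nu P = (\<Sum>x\<in>{x\<in>V. P x}. nu x)"

end

theory Submission
  imports Defs "HOL-Probability.Hoeffding"
begin


lemma hoeff_fin:
  fixes p g :: "'b \<Rightarrow> real"
  assumes fin: "finite S" and p0: "\<forall>y\<in>S. 0 \<le> p y" and ps: "sum p S = 1"
    and rng: "\<forall>y\<in>S. p y \<noteq> 0 \<longrightarrow> a \<le> g y \<and> g y \<le> b"
    and mean: "(\<Sum>y\<in>S. p y * g y) = 0" and l: "0 < l"
  shows "(\<Sum>y\<in>S. p y * exp (l * g y)) \<le> exp (l^2 * (b-a)^2/8)"
proof -
  have pa: "p y * a \<le> p y * g y" if "y \<in> S" for y
    using rng p0 that by (cases "p y = 0") (auto intro: mult_left_mono)
  have pb: "p y * g y \<le> p y * b" if "y \<in> S" for y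
    using rng p0 that by (cases "p y = 0") (auto intro: mult_left_mono)
  have "a = (\<Sum>y\<in>S. p y * a)" using ps by (simp add: sum_distrib_right[symmetric])
  also have "\<dots> \<le> 0" using mean sum_mono[of S "\<lambda>y. p y * a" "\<lambda>y. p y * g y"] pa by simp
  finally have a0: "a \<le> 0" .
  have "0 \<le> (\<Sum>y\<in>S. p y * b)" using mean sum_mono[of S "\<lambda>y. p y * g y" "\<lambda>y. p y * b"] pb by simp
  also have "\<dots> = b" using ps by (simp add: sum_distrib_right[symmetric])
  finally have b0: "0 \<le> b" .
  show ?thesis
  proof (cases "a = b")
    case True
    then have "a = 0" "b = 0" using a0 b0 by auto
    have "p y * exp (l * g y) = p y" if "y \<in> S" for y
      using rng that \<open>a = 0\<close> \<open>b = 0\<close> by (cases "p y = 0") auto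
    then have "(\<Sum>y\<in>S. p y * exp (l * g y)) = 1" using ps sum.cong[of S S "\<lambda>y. p y * exp (l * g y)" p] by simp
    then show ?thesis using True by simp
  next
    case False
    then have ab: "a < b" using a0 b0 by auto
    have pt: "p y * exp (l * g y) \<le> p y * ((b - g y)/(b-a) * exp (l*a) + (g y - a)/(b-a) * exp (l*b))"
      if y: "y \<in> S" for y
    proof (cases "p y = 0")
      case True then show ?thesis by simp
    next
      case False
      then have x: "g y \<in> {a..b}" using rng y by auto
      define t where "t = (b - g y) / (b-a)"
      have t: "t \<in> {0..1}" using x ab by (auto simp: t_def)
      have "exp (l * ((1 - t) *\<^sub>R b + t *\<^sub>R a)) \<le> (1 - t) * exp (l * b) + t * exp (l * a)"
        using t l by (intro convex_onD[OF convex_on_exp]) auto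
      also have "(1 - t) *\<^sub>R b + t *\<^sub>R a = g y"
        using ab by (simp add: t_def divide_simps) (simp add: algebra_simps)
      also have "1 - t = (g y - a) / (b - a)"
        using ab by (simp add: field_simps t_def)
      finally have "exp (l * g y) \<le> (b - g y)/(b-a) * exp (l*a) + (g y - a)/(b-a) * exp (l*b)"
        by (simp add: t_def)
      then show ?thesis using p0 y by (intro mult_left_mono) auto
    qed
    have "(\<Sum>y\<in>S. p y * exp (l * g y)) \<le> (\<Sum>y\<in>S. p y * ((b - g y)/(b-a) * exp (l*a) + (g y - a)/(b-a) * exp (l*b)))"
      by (intro sum_mono pt)
    also have "\<dots> = (\<Sum>y\<in>S. (p y * b - p y * g y)) * (exp (l*a) / (b-a)) + (\<Sum>y\<in>S. (p y * g y - p y * a)) * (exp (l*b)/(b-a))"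
      unfolding sum_distrib_right sum.distrib[symmetric] by (rule sum.cong) (auto simp: field_simps)
    also have "\<dots> = (b * exp (l*a) - a * exp (l*b)) / (b-a)"
    proof -
      have e: "(\<Sum>y\<in>S. p y * b) = b" "(\<Sum>y\<in>S. p y * a) = a"
        using ps by (simp_all add: sum_distrib_right[symmetric])
      have s1: "(\<Sum>y\<in>S. (p y * b - p y * g y)) = b" using e mean by (simp add: sum_subtractf)
      have s2: "(\<Sum>y\<in>S. (p y * g y - p y * a)) = - a" using e mean by (simp add: sum_subtractf)
      show ?thesis unfolding s1 s2 by (simp add: diff_divide_distrib)
    qed
    also have "\<dots> \<le> exp (l^2 * (b-a)^2/8)"
    proof -
      define q where "q = -a/(b-a)"
      define z where "z = l*(b-a)"
      have q: "q \<ge> 0" using a0 ab unfolding q_def by (intro divide_nonneg_pos) auto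
      have z: "z \<ge> 0" using l ab by (simp add: z_def)
      have pos: "1 + q * (exp z - 1) > 0"
        using q z by (intro add_pos_nonneg mult_nonneg_nonneg) auto
      have aux: "-z * q + ln (1 + q * (exp z - 1)) \<le> z^2/8"
        using Hoeffdings_lemma_aux[OF z q] by simp
      have "(b * exp (l*a) - a * exp (l*b)) / (b-a) = exp (-z*q) * (1 + q * (exp z - 1))"
        using ab by (simp add: q_def z_def field_simps flip: exp_add)
      also have "\<dots> = exp (-z * q + ln (1 + q * (exp z - 1)))"
        using pos by (subst exp_add) simp
      also have "\<dots> \<le> exp (z^2/8)" using aux by simp
      also have "z^2/8 = l^2 * (b-a)^2/8" by (simp add: z_def power_mult_distrib)
      finally show ?thesis .
    qed
    finally show ?thesis .
  qed
qed



lemma reach_lip: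
  assumes "lipschitz_graph E 1 f" and "reach E n u v"
  shows "\<bar>f u - f v\<bar> \<le> real n"
  using assms(2)
proof (induction rule: reach.induct)
  case (reach0 u) then show ?case by simp
next
  case (reachS u w n v)
  have "\<bar>f u - f w\<bar> \<le> 1" using assms(1) reachS(1) unfolding lipschitz_graph_def by blast
  then show ?case using reachS(3) by simp
qed

lemma reach0_eq: "reach E 0 u v \<Longrightarrow> u = v"
  by (auto elim: reach.cases)

locale gsetup =
  fixes V :: "'a set" and E :: "'a \<Rightarrow> 'a \<Rightarrow> bool" and m :: "'a \<Rightarrow> 'a \<Rightarrow> real"
    and nu :: "'a \<Rightarrow> real" and \<kappa> :: real
  assumes G: "graph V E" and C: "connected_graph V E"
    and RW: "random_walk V E m" and ERG: "ergodic_with V m nu"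
    and kpos: "0 < \<kappa>" and RIC: "ricci_at_least V E m \<kappa>"
begin

lemma finV: "finite V" using G unfolding graph_def by auto

lemma m_nonneg: "x \<in> V \<Longrightarrow> 0 \<le> m x y"
  using RW unfolding random_walk_def prob_dist_def by auto
lemma m_out: "x \<in> V \<Longrightarrow> y \<notin> V \<Longrightarrow> m x y = 0"
  using RW unfolding random_walk_def prob_dist_def by auto
lemma m_sum: "x \<in> V \<Longrightarrow> sum (m x) V = 1"
  using RW unfolding random_walk_def prob_dist_def by auto
lemma m_supp: "x \<in> V \<Longrightarrow> m x y \<noteq> 0 \<Longrightarrow> y = x \<or> E x y"
  using RW unfolding random_walk_def by auto
lemma m_le1: "x \<in> V \<Longrightarrow> m x y \<le> 1"
proof -
  assume x: "x \<in> V"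
  show ?thesis
  proof (cases "y \<in> V")
    case True
    then have "m x y \<le> sum (m x) V" using finV m_nonneg[OF x] by (intro member_le_sum) auto
    then show ?thesis using m_sum[OF x] by simp
  qed (use m_out[OF x] in simp)
qed

lemma nu_nonneg: "0 \<le> nu x"
  using ERG unfolding ergodic_with_def invariant_dist_def prob_dist_def by auto
lemma nu_sum: "sum nu V = 1"
  using ERG unfolding ergodic_with_def invariant_dist_def prob_dist_def by auto
lemma nu_inv: "y \<in> V \<Longrightarrow> (\<Sum>x\<in>V. nu x * m x y) = nu y"
  using ERG unfolding ergodic_with_def invariant_dist_def by auto

lemma reach_ex: "u \<in> V \<Longrightarrow> v \<in> V \<Longrightarrow> reach E (LEAST n. reach E n u v) u v"
  using C unfolding connected_graph_def by (meson LeastI_ex)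

lemma lip1:
  assumes "lipschitz_graph E 1 f" "u \<in> V" "v \<in> V"
  shows "\<bar>f u - f v\<bar> \<le> gdist E u v"
  unfolding gdist_def using reach_lip[OF assms(1) reach_ex[OF assms(2,3)]] .

lemma gdist_nonneg: "0 \<le> gdist E u v" by (simp add: gdist_def)

lemma gdist_le1: "v = u \<or> E u v \<Longrightarrow> gdist E u v \<le> 1"
proof -
  assume h: "v = u \<or> E u v"
  have "\<exists>k\<le>1. reach E k u v"
  proof (cases "v = u")
    case True then show ?thesis using reach.reach0[of E u] by blast
  next
    case False then have "E u v" using h by blast
    then have "reach E (Suc 0) u v" by (rule reach.reachS[OF _ reach.reach0])
    then show ?thesis by auto
  qed
  then obtain k where "k \<le> 1" "reach E k u v" by blast
  then have "(LEAST n. reach E n u v) \<le> 1" using Least_le[of "\<lambda>n. reach E n u v" k] by linarith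
  then show ?thesis by (simp add: gdist_def)
qed

lemma gdist_refl: "gdist E u u = 0"
  unfolding gdist_def by (metis Least_eq_0 of_nat_0 reach.reach0)

lemma gdist_pos: "u \<in> V \<Longrightarrow> v \<in> V \<Longrightarrow> u \<noteq> v \<Longrightarrow> 1 \<le> gdist E u v"
proof -
  assume "u \<in> V" "v \<in> V" "u \<noteq> v"
  then have r: "reach E (LEAST n. reach E n u v) u v" using reach_ex by blast
  have "(LEAST n. reach E n u v) \<noteq> 0"
    by (metis r reach0_eq \<open>u \<noteq> v\<close>)
  then show ?thesis by (simp add: gdist_def)
qed

definition lipV :: "real \<Rightarrow> ('a \<Rightarrow> real) \<Rightarrow> bool" where
  "lipV L g \<longleftrightarrow> (\<forall>x\<in>V. \<forall>y\<in>V. \<bar>g x - g y\<bar> \<le> L * gdist E x y)"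

definition Mop :: "('a \<Rightarrow> real) \<Rightarrow> 'a \<Rightarrow> real" where
  "Mop g = (\<lambda>x. \<Sum>y\<in>V. m x y * g y)"

lemma coupling_ex:
  assumes "x \<in> V" "y \<in> V"
  shows "coupling V (m x) (m y) (\<lambda>p. m x (fst p) * m y (snd p))"
  unfolding coupling_def
proof (intro conjI allI ballI)
  fix p :: "'a \<times> 'a"
  show "0 \<le> m x (fst p) * m y (snd p)" using assms m_nonneg by simp
  show "m x (fst p) * m y (snd p) \<le> 1" using assms m_nonneg m_le1 by (simp add: mult_le_one)
next
  fix a assume "a \<in> V"
  show "(\<Sum>b\<in>V. m x (fst (a, b)) * m y (snd (a, b))) = m x a"
    using m_sum[OF assms(2)] by (simp add: sum_distrib_left[symmetric])
next
  fix b assume "b \<in> V"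
  show "(\<Sum>a\<in>V. m x (fst (a, b)) * m y (snd (a, b))) = m y b"
    using m_sum[OF assms(1)] by (simp add: sum_distrib_right[symmetric])
qed

lemma coupling_bound:
  assumes A: "coupling V (m x) (m y) A" and L: "lipV L g" "0 \<le> L"
  shows "\<bar>Mop g x - Mop g y\<bar> \<le> L * (\<Sum>(a, b)\<in>V \<times> V. A (a, b) * gdist E a b)"
proof -
  have A0: "\<And>p. 0 \<le> A p" using A unfolding coupling_def by auto
  have "Mop g x = (\<Sum>a\<in>V. (\<Sum>b\<in>V. A (a, b)) * g a)"
    unfolding Mop_def using A unfolding coupling_def by (intro sum.cong) auto
  also have "\<dots> = (\<Sum>(a, b)\<in>V \<times> V. A (a, b) * g a)"
    by (simp add: sum_distrib_right sum.cartesian_product)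
  finally have 1: "Mop g x = (\<Sum>(a, b)\<in>V \<times> V. A (a, b) * g a)" .
  have "Mop g y = (\<Sum>b\<in>V. (\<Sum>a\<in>V. A (a, b)) * g b)"
    unfolding Mop_def using A unfolding coupling_def by (intro sum.cong) auto
  also have "\<dots> = (\<Sum>a\<in>V. \<Sum>b\<in>V. A (a, b) * g b)"
    unfolding sum_distrib_right by (rule sum.swap)
  also have "\<dots> = (\<Sum>(a, b)\<in>V \<times> V. A (a, b) * g b)"
    by (simp add: sum.cartesian_product)
  finally have 2: "Mop g y = (\<Sum>(a, b)\<in>V \<times> V. A (a, b) * g b)" .
  have "Mop g x - Mop g y = (\<Sum>(a, b)\<in>V \<times> V. A (a, b) * (g a - g b))"
    unfolding 1 2 by (simp add: sum_subtractf[symmetric] case_prod_beta right_diff_distrib)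
  also have "\<bar>\<dots>\<bar> \<le> (\<Sum>(a, b)\<in>V \<times> V. \<bar>A (a, b) * (g a - g b)\<bar>)"
    using sum_abs[of "\<lambda>(a,b). A (a, b) * (g a - g b)" "V \<times> V"] by (simp add: split_beta)
  also have "\<dots> \<le> (\<Sum>(a, b)\<in>V \<times> V. A (a, b) * (L * gdist E a b))"
  proof (intro sum_mono)
    fix p assume "p \<in> V \<times> V"
    then show "(case p of (a, b) \<Rightarrow> \<bar>A (a, b) * (g a - g b)\<bar>) \<le> (case p of (a, b) \<Rightarrow> A (a, b) * (L * gdist E a b))"
    proof (cases p)
      case (Pair a b)
      with \<open>p \<in> V \<times> V\<close> have ab: "a \<in> V" "b \<in> V" by auto
      have l: "\<bar>g a - g b\<bar> \<le> L * gdist E a b" using L(1) ab unfolding lipV_def by blast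
      have "\<bar>A (a, b) * (g a - g b)\<bar> = A (a, b) * \<bar>g a - g b\<bar>"
        using A0[of "(a,b)"] by (simp add: abs_mult)
      also have "\<dots> \<le> A (a, b) * (L * gdist E a b)"
        using l A0[of "(a,b)"] by (rule mult_left_mono)
      finally show ?thesis using Pair by simp
    qed
  qed
  also have "\<dots> = L * (\<Sum>(a, b)\<in>V \<times> V. A (a, b) * gdist E a b)"
    unfolding sum_distrib_left by (intro sum.cong) (auto simp: split_beta)
  finally show ?thesis .
qed

lemma W_props:
  assumes "x \<in> V" "y \<in> V" "x \<noteq> y"
  shows "0 \<le> transport_dist V E (m x) (m y)"
    and "transport_dist V E (m x) (m y) \<le> (1 - \<kappa>) * gdist E x y"
    and "\<And>L g. lipV L g \<Longrightarrow> 0 \<le> L \<Longrightarrow> \<bar>Mop g x - Mop g y\<bar> \<le> L * transport_dist V E (m x) (m y)"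
proof -
  define S where "S = {(\<Sum>(a, b)\<in>V \<times> V. A (a, b) * gdist E a b) | A. coupling V (m x) (m y) A}"
  have W: "transport_dist V E (m x) (m y) = Inf S" unfolding S_def transport_dist_def by simp
  have ne: "S \<noteq> {}" using coupling_ex[OF assms(1,2)] unfolding S_def by blast
  have nn: "\<forall>c\<in>S. 0 \<le> c" unfolding S_def coupling_def
    by (auto intro!: sum_nonneg mult_nonneg_nonneg gdist_nonneg)
  show W0: "0 \<le> transport_dist V E (m x) (m y)" unfolding W by (rule cInf_greatest[OF ne]) (use nn in blast)
  have d: "1 \<le> gdist E x y" using gdist_pos assms by blast
  have "\<kappa> \<le> 1 - transport_dist V E (m x) (m y) / gdist E x y"
    using RIC assms unfolding ricci_at_least_def ricci_def by blast
  then have "transport_dist V E (m x) (m y) / gdist E x y \<le> 1 - \<kappa>" by simp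
  then show "transport_dist V E (m x) (m y) \<le> (1 - \<kappa>) * gdist E x y"
    using d by (simp add: divide_le_eq)
  fix L g assume L: "lipV L g" "0 \<le> L"
  have all: "\<forall>c\<in>S. \<bar>Mop g x - Mop g y\<bar> \<le> L * c"
    unfolding S_def using coupling_bound[OF _ L] by blast
  show "\<bar>Mop g x - Mop g y\<bar> \<le> L * transport_dist V E (m x) (m y)"
  proof (cases "L = 0")
    case True
    then show ?thesis using all ne by auto
  next
    case False
    then have Lp: "L > 0" using L by simp
    have "\<forall>c\<in>S. \<bar>Mop g x - Mop g y\<bar> / L \<le> c" using all Lp by (simp add: divide_le_eq mult.commute)
    then have "\<bar>Mop g x - Mop g y\<bar> / L \<le> Inf S" using ne by (intro cInf_greatest) auto
    then show ?thesis unfolding W using Lp by (simp add: divide_le_eq mult.commute)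
  qed
qed

lemma kappa_le1: "x \<in> V \<Longrightarrow> y \<in> V \<Longrightarrow> x \<noteq> y \<Longrightarrow> \<kappa> \<le> 1"
proof -
  assume a: "x \<in> V" "y \<in> V" "x \<noteq> y"
  have "0 \<le> (1 - \<kappa>) * gdist E x y" using W_props(1,2)[OF a] by linarith
  moreover have "1 \<le> gdist E x y" using gdist_pos a by blast
  ultimately show ?thesis by (simp add: zero_le_mult_iff)
qed

end


context gsetup begin

lemma Mop_lip:
  assumes "lipV L g" "0 \<le> L"
  shows "lipV ((1-\<kappa>)*L) (Mop g)"
  unfolding lipV_def
proof (intro ballI)
  fix x y assume xy: "x \<in> V" "y \<in> V"
  show "\<bar>Mop g x - Mop g y\<bar> \<le> (1 - \<kappa>) * L * gdist E x y"
  proof (cases "x = y")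
    case True then show ?thesis by (simp add: gdist_refl)
  next
    case False
    have "\<bar>Mop g x - Mop g y\<bar> \<le> L * transport_dist V E (m x) (m y)"
      using W_props(3)[OF xy False assms] .
    also have "\<dots> \<le> L * ((1 - \<kappa>) * gdist E x y)"
      using W_props(2)[OF xy False] assms(2) by (rule mult_left_mono)
    finally show ?thesis by (simp add: mult_ac)
  qed
qed

lemma exp_step:
  assumes L: "lipV L g" "0 \<le> L" and l: "0 < l" and x: "x \<in> V"
  shows "Mop (\<lambda>y. exp (l * g y)) x \<le> exp (l * Mop g x) * exp (l^2 * L^2 / 2)"
proof -
  define mu where "mu = Mop g x"
  have rng: "\<forall>y\<in>V. m x y \<noteq> 0 \<longrightarrow> g x - mu - L \<le> g y - mu \<and> g y - mu \<le> g x - mu + L"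
  proof (intro ballI impI)
    fix y assume y: "y \<in> V" "m x y \<noteq> 0"
    then have "gdist E x y \<le> 1" using m_supp[OF x] gdist_le1 by blast
    then have "L * gdist E x y \<le> L" using L(2) by (simp add: mult_left_le)
    moreover have "\<bar>g x - g y\<bar> \<le> L * gdist E x y" using L(1) x y unfolding lipV_def by blast
    ultimately show "g x - mu - L \<le> g y - mu \<and> g y - mu \<le> g x - mu + L" by linarith
  qed
  have mean: "(\<Sum>y\<in>V. m x y * (g y - mu)) = 0"
  proof -
    have "(\<Sum>y\<in>V. m x y * (g y - mu)) = (\<Sum>y\<in>V. m x y * g y) - (\<Sum>y\<in>V. m x y) * mu"
      by (simp add: right_diff_distrib sum_subtractf sum_distrib_right)
    also have "\<dots> = 0" using m_sum[OF x] by (simp add: mu_def Mop_def)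
    finally show ?thesis .
  qed
  have H: "(\<Sum>y\<in>V. m x y * exp (l * (g y - mu))) \<le> exp (l^2 * ((g x - mu + L) - (g x - mu - L))^2/8)"
    by (rule hoeff_fin[OF finV _ m_sum[OF x] rng mean l]) (use m_nonneg[OF x] in auto)
  have e: "l^2 * ((g x - mu + L) - (g x - mu - L))^2/8 = l^2 * L^2 / 2"
    by (simp add: power2_eq_square algebra_simps)
  have "Mop (\<lambda>y. exp (l * g y)) x = (\<Sum>y\<in>V. m x y * (exp (l * mu) * exp (l * (g y - mu))))"
    unfolding Mop_def by (intro sum.cong) (auto simp: mult_exp_exp algebra_simps)
  also have "\<dots> = exp (l * mu) * (\<Sum>y\<in>V. m x y * exp (l * (g y - mu)))"
    by (simp add: sum_distrib_left mult_ac)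
  also have "\<dots> \<le> exp (l * mu) * exp (l^2 * L^2 / 2)"
    using H e by (intro mult_left_mono) (auto simp: mult.commute)
  finally show ?thesis by (simp add: mu_def)
qed

lemma inv_sum: "(\<Sum>x\<in>V. nu x * Mop h x) = (\<Sum>y\<in>V. nu y * h y)"
proof -
  have "(\<Sum>x\<in>V. nu x * Mop h x) = (\<Sum>x\<in>V. \<Sum>y\<in>V. nu x * m x y * h y)"
    unfolding Mop_def by (simp add: sum_distrib_left mult_ac)
  also have "\<dots> = (\<Sum>y\<in>V. \<Sum>x\<in>V. nu x * m x y * h y)" by (rule sum.swap)
  also have "\<dots> = (\<Sum>y\<in>V. (\<Sum>x\<in>V. nu x * m x y) * h y)" by (simp add: sum_distrib_right)
  also have "\<dots> = (\<Sum>y\<in>V. nu y * h y)" by (intro sum.cong) (auto simp: nu_inv)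
  finally show ?thesis .
qed

definition Phi :: "real \<Rightarrow> ('a \<Rightarrow> real) \<Rightarrow> real" where
  "Phi l g = (\<Sum>x\<in>V. nu x * exp (l * g x))"

lemma Phi_step:
  assumes "lipV L g" "0 \<le> L" "0 < l"
  shows "Phi l g \<le> Phi l (Mop g) * exp (l^2 * L^2 / 2)"
proof -
  have "Phi l g = (\<Sum>x\<in>V. nu x * Mop (\<lambda>y. exp (l * g y)) x)"
    unfolding Phi_def by (rule inv_sum[symmetric])
  also have "\<dots> \<le> (\<Sum>x\<in>V. nu x * (exp (l * Mop g x) * exp (l^2 * L^2 / 2)))"
    by (intro sum_mono mult_left_mono exp_step assms nu_nonneg)
  also have "\<dots> = Phi l (Mop g) * exp (l^2 * L^2 / 2)"
    unfolding Phi_def by (simp add: sum_distrib_right mult_ac)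
  finally show ?thesis .
qed

lemma iter_lip:
  assumes "lipV 1 f" "\<kappa> \<le> 1"
  shows "lipV ((1-\<kappa>)^n) ((Mop^^n) f)"
proof (induction n)
  case 0 then show ?case using assms by simp
next
  case (Suc n)
  have "lipV ((1-\<kappa>) * (1-\<kappa>)^n) (Mop ((Mop^^n) f))"
    using Mop_lip[OF Suc] assms(2) by simp
  then show ?case by simp
qed

lemma Phi_iter:
  assumes "lipV 1 f" "\<kappa> \<le> 1" "0 < l"
  shows "Phi l f \<le> Phi l ((Mop^^n) f) * exp (l^2/2 * (\<Sum>k<n. ((1-\<kappa>)^2)^k))"
proof (induction n)
  case 0 then show ?case by simp
next
  case (Suc n)
  have st: "Phi l ((Mop^^n) f) \<le> Phi l ((Mop^^Suc n) f) * exp (l^2 * ((1-\<kappa>)^n)^2 / 2)"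
    using Phi_step[OF iter_lip[OF assms(1,2)] _ assms(3)] assms(2) by simp
  have pw: "((1-\<kappa>)^n)^2 = ((1-\<kappa>)^2)^n" by (metis power_mult mult.commute)
  have "Phi l f \<le> Phi l ((Mop^^n) f) * exp (l^2/2 * (\<Sum>k<n. ((1-\<kappa>)^2)^k))" by (rule Suc)
  also have "\<dots> \<le> Phi l ((Mop^^Suc n) f) * exp (l^2 * ((1-\<kappa>)^n)^2 / 2) * exp (l^2/2 * (\<Sum>k<n. ((1-\<kappa>)^2)^k))"
    using st by (intro mult_right_mono) auto
  also have "\<dots> = Phi l ((Mop^^Suc n) f) * exp (l^2/2 * (\<Sum>k<Suc n. ((1-\<kappa>)^2)^k))"
    by (simp add: pw mult.assoc mult_exp_exp algebra_simps)
  finally show ?case .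
qed

lemma expect_iter: "expect V nu ((Mop^^n) f) = expect V nu f"
proof (induction n)
  case 0 then show ?case by simp
next
  case (Suc n) then show ?case unfolding expect_def using inv_sum by simp
qed

definition D :: real where "D = (\<Sum>p\<in>V \<times> V. gdist E (fst p) (snd p))"

lemma gdist_le_D: "x \<in> V \<Longrightarrow> y \<in> V \<Longrightarrow> gdist E x y \<le> D"
  unfolding D_def using member_le_sum[of "(x,y)" "V \<times> V" "\<lambda>p. gdist E (fst p) (snd p)"]
    finV gdist_nonneg by auto

lemma D_nonneg: "0 \<le> D" unfolding D_def by (intro sum_nonneg gdist_nonneg)

lemma Phi_bound:
  assumes "lipV c g" "0 \<le> c" "0 < l"
  shows "Phi l g \<le> exp (l * (expect V nu g + c * D))"
proof -
  have gx: "g x \<le> expect V nu g + c * D" if x: "x \<in> V" for x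
  proof -
    have "g x - expect V nu g = (\<Sum>y\<in>V. nu y * (g x - g y))"
      unfolding expect_def using nu_sum
      by (simp add: right_diff_distrib sum_subtractf sum_distrib_right[symmetric])
    also have "\<dots> \<le> (\<Sum>y\<in>V. nu y * (c * D))"
    proof (intro sum_mono mult_left_mono nu_nonneg)
      fix y assume y: "y \<in> V"
      have "\<bar>g x - g y\<bar> \<le> c * gdist E x y" using assms(1) x y unfolding lipV_def by blast
      also have "\<dots> \<le> c * D" using gdist_le_D[OF x y] assms(2) by (rule mult_left_mono)
      finally show "g x - g y \<le> c * D" by linarith
    qed
    also have "\<dots> = c * D" using nu_sum by (simp add: sum_distrib_right[symmetric])
    finally show ?thesis by linarith
  qed
  have "Phi l g \<le> (\<Sum>x\<in>V. nu x * exp (l * (expect V nu g + c * D)))"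
    unfolding Phi_def using gx assms(3)
    by (intro sum_mono mult_left_mono nu_nonneg) auto
  also have "\<dots> = exp (l * (expect V nu g + c * D))"
    using nu_sum by (simp add: sum_distrib_right[symmetric])
  finally show ?thesis .
qed

end


context gsetup begin

lemma Phi_nonneg: "0 \<le> Phi l g"
  unfolding Phi_def by (intro sum_nonneg mult_nonneg_nonneg nu_nonneg) auto

lemma upper:
  assumes f: "lipschitz_graph E 1 f" and t: "1 \<le> t"
  shows "dprob V nu (\<lambda>x. f x - expect V nu f > t) \<le> exp (- (t^2 * \<kappa>) / 7)"
proof (cases "\<exists>x\<in>V. \<exists>y\<in>V. x \<noteq> y")
  case False
  have ex: "expect V nu f = f x" if x: "x \<in> V" for x
  proof -
    have "expect V nu f = (\<Sum>y\<in>V. nu y * f x)"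
      unfolding expect_def using False x by (intro sum.cong) auto
    also have "\<dots> = f x" using nu_sum by (simp add: sum_distrib_right[symmetric])
    finally show ?thesis .
  qed
  have e: "{x\<in>V. f x - expect V nu f > t} = {}" using ex t by auto
  have "dprob V nu (\<lambda>x. f x - expect V nu f > t) = 0" unfolding dprob_def by (simp only: e sum.empty)
  then show ?thesis by simp
next
  case True
  then obtain x0 y0 where xy: "x0 \<in> V" "y0 \<in> V" "x0 \<noteq> y0" by blast
  have k1: "\<kappa> \<le> 1" using kappa_le1[OF xy] .
  define c where "c = 1 - \<kappa>"
  have c0: "0 \<le> c" and c1: "c < 1" using k1 kpos by (auto simp: c_def)
  have lf: "lipV 1 f" unfolding lipV_def using lip1[OF f] by simp
  define l where "l = t * \<kappa>"
  have l0: "0 < l" using t kpos by (simp add: l_def)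
  define Ef where "Ef = expect V nu f"
  obtain n where n: "c^n < 1 / (4 * (D + 1))"
    using real_arch_pow_inv[OF _ c1, of "1 / (4 * (D + 1))"] D_nonneg by auto
  have cnD: "c^n * D \<le> 1/4"
  proof -
    have "c^n * D \<le> c^n * (D + 1)" using c0 by (simp add: mult_left_mono)
    also have "\<dots> \<le> 1 / (4 * (D + 1)) * (D + 1)"
      using n D_nonneg by (intro mult_right_mono) auto
    also have "\<dots> = 1/4" using D_nonneg by simp
    finally show ?thesis .
  qed
  define q where "q = c^2"
  have "c * c \<le> c" using c0 c1 by (simp add: mult_left_le)
  then have q0: "0 \<le> q" and q1: "q < 1" using c0 c1 by (auto simp: q_def power2_eq_square)
  have S: "(\<Sum>k<n. q^k) \<le> 1 / \<kappa>"
  proof -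
    have "(\<Sum>k<n. q^k) = (1 - q^n) / (1 - q)"
    proof -
      have "(\<Sum>k<n. q^k) = (q^n - 1) / (q - 1)" using geometric_sum[of q n] q1 by simp
      also have "\<dots> = (-(q^n - 1)) / (-(q - 1))" by (rule minus_divide_divide[symmetric])
      also have "\<dots> = (1 - q^n) / (1 - q)" by simp
      finally show ?thesis .
    qed
    also have "\<dots> \<le> 1 / (1 - q)"
      using q0 q1 by (intro divide_right_mono) auto
    also have "\<dots> \<le> 1 / \<kappa>"
    proof (rule divide_left_mono)
      show "\<kappa> \<le> 1 - q" using k1 kpos by (simp add: q_def c_def power2_eq_square algebra_simps)
    qed (use kpos q1 in auto)
    finally show ?thesis .
  qed
  have Phi: "Phi l f \<le> exp (l * (Ef + 1/4)) * exp (l^2 / (2 * \<kappa>))"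
  proof -
    have "Phi l f \<le> Phi l ((Mop^^n) f) * exp (l^2/2 * (\<Sum>k<n. ((1-\<kappa>)^2)^k))"
      by (rule Phi_iter[OF lf k1 l0])
    also have "\<dots> \<le> exp (l * (Ef + 1/4)) * exp (l^2 / (2 * \<kappa>))"
    proof (intro mult_mono)
      have "Phi l ((Mop^^n) f) \<le> exp (l * (expect V nu ((Mop^^n) f) + c^n * D))"
        by (rule Phi_bound[OF iter_lip[OF lf k1, of n, folded c_def]]) (use c0 l0 in auto)
      also have "\<dots> \<le> exp (l * (Ef + 1/4))"
        using cnD l0 by (simp add: expect_iter Ef_def)
      finally show "Phi l ((Mop^^n) f) \<le> exp (l * (Ef + 1/4))" .
      have "l^2/2 * (\<Sum>k<n. ((1-\<kappa>)^2)^k) \<le> l^2/2 * (1/\<kappa>)"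
        using S by (intro mult_left_mono) (auto simp: q_def c_def)
      then show "exp (l^2/2 * (\<Sum>k<n. ((1-\<kappa>)^2)^k)) \<le> exp (l^2 / (2 * \<kappa>))" by simp
    qed (auto simp: Phi_nonneg)
    finally show ?thesis .
  qed
  define Q where "Q = {x\<in>V. f x - Ef > t}"
  have "dprob V nu (\<lambda>x. f x - expect V nu f > t) = (\<Sum>x\<in>Q. nu x)"
    unfolding dprob_def Q_def Ef_def by simp
  also have "\<dots> \<le> (\<Sum>x\<in>Q. nu x * exp (l * (f x - Ef - t)))"
  proof (intro sum_mono)
    fix x assume "x \<in> Q"
    then have "0 \<le> l * (f x - Ef - t)" using l0 unfolding Q_def by auto
    then have "1 \<le> exp (l * (f x - Ef - t))" by simp
    then show "nu x \<le> nu x * exp (l * (f x - Ef - t))" using nu_nonneg[of x] mult_left_mono by fastforce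
  qed
  also have "\<dots> \<le> (\<Sum>x\<in>V. nu x * exp (l * (f x - Ef - t)))"
    using finV by (intro sum_mono2) (auto simp: Q_def nu_nonneg)
  also have "\<dots> = exp (- (l * (Ef + t))) * Phi l f"
    unfolding Phi_def sum_distrib_left by (intro sum.cong) (auto simp: mult_exp_exp algebra_simps)
  also have "\<dots> \<le> exp (- (l * (Ef + t))) * (exp (l * (Ef + 1/4)) * exp (l^2 / (2 * \<kappa>)))"
    using Phi by (intro mult_left_mono) auto
  also have "\<dots> = exp (- (l * t) + l / 4 + l^2 / (2 * \<kappa>))"
    by (simp add: mult_exp_exp algebra_simps)
  also have "\<dots> \<le> exp (- (t^2 * \<kappa>) / 7)"
  proof -
    have e: "l^2 / (2 * \<kappa>) = t^2 * \<kappa> / 2" using kpos by (simp add: l_def power2_eq_square field_simps)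
    have tt: "t * \<kappa> \<le> t^2 * \<kappa>" using t kpos by (simp add: power2_eq_square)
    have a: "- (l * t) + l / 4 + l^2 / (2 * \<kappa>) = (t * \<kappa>) / 4 - (t * t * \<kappa>) / 2"
      unfolding e by (simp add: l_def power2_eq_square algebra_simps)
    have b: "- (t^2 * \<kappa>) / 7 = - (t * t * \<kappa>) / 7" by (simp add: power2_eq_square)
    have tt': "t * \<kappa> \<le> t * t * \<kappa>" using tt by (simp add: power2_eq_square)
    have tk0: "0 \<le> t * \<kappa>" using t kpos by simp
    have "- (l * t) + l / 4 + l^2 / (2 * \<kappa>) \<le> - (t^2 * \<kappa>) / 7"
      unfolding a b using tt' tk0 by linarith
    then show ?thesis by simp
  qed
  finally show ?thesis .
qed

end


theorem theorem1:
  fixes V :: "'a set" and E :: "'a \<Rightarrow> 'a \<Rightarrow> bool" and m :: "'a \<Rightarrow> 'a \<Rightarrow> real"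
    and nu :: "'a \<Rightarrow> real" and \<kappa> :: real
  assumes "graph V E" and "connected_graph V E"
    and "random_walk V E m" and "ergodic_with V m nu"
    and "0 < \<kappa>" and "ricci_at_least V E m \<kappa>"
  shows "\<forall>f t. lipschitz_graph E 1 f \<and> 1 \<le> t \<longrightarrow>
           dprob V nu (\<lambda>x. f x - expect V nu f > t) \<le> exp (- (t\<^sup>2 * \<kappa>) / 7)
         \<and> dprob V nu (\<lambda>x. f x - expect V nu f < - t) \<le> exp (- (t\<^sup>2 * \<kappa>) / 7)"
proof (intro allI impI conjI)
  interpret gsetup V E m nu \<kappa> by unfold_locales (fact assms)+
  fix f :: "'a \<Rightarrow> real" and t :: real
  assume h: "lipschitz_graph E 1 f \<and> 1 \<le> t"
  show "dprob V nu (\<lambda>x. f x - expect V nu f > t) \<le> exp (- (t\<^sup>2 * \<kappa>) / 7)"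
    using upper h by blast
  have f': "lipschitz_graph E 1 (\<lambda>x. - f x)"
    using h unfolding lipschitz_graph_def by (metis abs_minus_commute minus_diff_eq diff_minus_eq_add uminus_add_conv_diff)
  have ex: "expect V nu (\<lambda>x. - f x) = - expect V nu f"
    unfolding expect_def by (simp add: sum_negf)
  have "dprob V nu (\<lambda>x. f x - expect V nu f < - t) = dprob V nu (\<lambda>x. (- f x) - expect V nu (\<lambda>x. - f x) > t)"
    unfolding dprob_def ex by (rule arg_cong[where f="\<lambda>S. sum nu S"]) auto
  also have "\<dots> \<le> exp (- (t\<^sup>2 * \<kappa>) / 7)"
    using upper[OF f'] h by blast
  finally show "dprob V nu (\<lambda>x. f x - expect V nu f < - t) \<le> exp (- (t\<^sup>2 * \<kappa>) / 7)" .
qed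

end
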